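(* Let $P$ be a transition kernel on finite $\mathcal{S}$ with actions $\mathcal{A}$ admitting a linear feature representation $\phi:\mathcal{S}\times\mathcal{A}\to\mathbb{R}^K$. Let $\mathcal{K}=\{(s_k,a_k)\}\subset\mathcal{S}\times\mathcal{A}$ be a row basis index set of $\phi$, i.e. $\{\phi(s_k,a_k)\}_{k\in\mathcal{K}}$ is a basis of $\mathrm{span}\{\phi(s,a):(s,a)\in\mathcal{S}\times\mathcal{A}\}$. Then there exist coefficients $\{\lambda_k^{s,a}\}$ with $\phi(s,a)=\sum_{k\in\mathcal{K}}\lambda_k^{s,a}\phi(s_k,a_k)$ for all $(s,a)$, and the matrix $\widehat{P}(s'|s,a)=\sum_{k\in\mathcal{K}}\lambda_k^{s,a}\widehat{P}_\mathcal{K}(s'|s_k,a_k)$ satisfies: (1) $\widehat{P}(s'|s,a)$ is an unbiased estimate of $P(s'|s,a)$; (2) $\sum_{k\in\mathcal{K}}\lambda_k^{s,a}=1$ and $\sum_{s'}\widehat{P}(s'|s,a)=1$ for all $(s,a)$; (3) if $\lambda_k^{s,a}\ge0$ for all $k\in\mathcal{K}$ and all $(s,a)$, then $\widehat{P}(s'|s,a)\ge0$ for all $(s,a,s')$.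
   Context: $P$ admits a linear feature representation $\phi$ if $P(s'|s,a)=\sum_{k=1}^K\phi_k(s,a)\psi_k(s')$ for all $s,a,s'$, for some functions $\psi_k:\mathcal{S}\to\mathbb{R}$. For each $(s_k,a_k)\in\mathcal{K}$, $N$ i.i.d. samples are drawn from $P(\cdot|s_k,a_k)$ using a generative model, and $\widehat{P}_\mathcal{K}(s'|s_k,a_k)=\mathrm{count}(s_k,a_k,s')/N$, where $\mathrm{count}(s_k,a_k,s')$ is the number of these samples equal to $s'$. *)

theory Defs
  imports "HOL-Probability.Probability"
begin

definition linear_feature_rep ::
  "('s \<times> 'a \<Rightarrow> 's pmf) \<Rightarrow> ('s \<times> 'a \<Rightarrow> real ^ 'k::finite) \<Rightarrow> bool" where
  "linear_feature_rep P \<phi> \<longleftrightarrow>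
     (\<exists>\<psi> :: 'k \<Rightarrow> 's \<Rightarrow> real. \<forall>x s'. pmf (P x) s' = (\<Sum>k\<in>UNIV. \<phi> x $ k * \<psi> k s'))"

definition row_basis_index_set ::
  "('s \<times> 'a \<Rightarrow> real ^ 'k::finite) \<Rightarrow> ('s \<times> 'a) set \<Rightarrow> bool" where
  "row_basis_index_set \<phi> Kset \<longleftrightarrow>
     inj_on \<phi> Kset \<and> independent (\<phi> ` Kset) \<and> span (\<phi> ` Kset) = span (range \<phi>)"

text \<open>Generative-model sampling: for each (s_k,a_k) in Kset, N i.i.d. samples
  omega (s_k,a_k) i, i < N, drawn from P(.|s_k,a_k), independently across k.\<close>
definition sample_dist ::
  "('s \<times> 'a \<Rightarrow> 's pmf) \<Rightarrow> ('s \<times> 'a) set \<Rightarrow> nat \<Rightarrow> ('s \<times> 'a \<Rightarrow> nat \<Rightarrow> 's) pmf" where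
  "sample_dist P Kset N =
     Pi_pmf Kset undefined (\<lambda>x. Pi_pmf {..<N} undefined (\<lambda>_. P x))"

definition P_K_hat :: "nat \<Rightarrow> ('s \<times> 'a \<Rightarrow> nat \<Rightarrow> 's) \<Rightarrow> 's \<times> 'a \<Rightarrow> 's \<Rightarrow> real" where
  "P_K_hat N \<omega> x s' = real (card {i \<in> {..<N}. \<omega> x i = s'}) / real N"

definition P_hat ::
  "('s \<times> 'a) set \<Rightarrow> ('s \<times> 'a \<Rightarrow> 's \<times> 'a \<Rightarrow> real) \<Rightarrow> nat \<Rightarrow> ('s \<times> 'a \<Rightarrow> nat \<Rightarrow> 's)
     \<Rightarrow> 's \<times> 'a \<Rightarrow> 's \<Rightarrow> real" where
  "P_hat Kset lam N \<omega> x s' = (\<Sum>k\<in>Kset. lam x k * P_K_hat N \<omega> k s')"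

end

theory Submission
  imports Defs
begin

lemma card_as_sum:
  "real (card {i \<in> {..<N::nat}. Q i}) = (\<Sum>i<N. indicator {i. Q i} i)"
proof (induction N)
  case 0 then show ?case by simp
next
  case (Suc n)
  have "{i \<in> {..<Suc n}. Q i} = {i \<in> {..<n}. Q i} \<union> (if Q n then {n} else {})" by (auto simp: less_Suc_eq)
  then show ?case using Suc by (auto simp: card_insert_if)
qed

lemma pmf_int: "(\<And>x. norm (f x) \<le> B) \<Longrightarrow> integrable (measure_pmf p) (f :: _ \<Rightarrow> real)"
  by (rule measure_pmf.integrable_const_bound[where B=B]) auto

lemma PK_bound: "norm (P_K_hat N \<omega> k s') \<le> 1"
proof -
  have "card {i \<in> {..<N}. \<omega> k i = s'} \<le> N"
    using card_mono[of "{..<N}" "{i \<in> {..<N}. \<omega> k i = s'}"] by auto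
  then show ?thesis unfolding P_K_hat_def
    by (cases "N = 0") (auto simp: divide_le_eq_1)
qed

lemma expect_PK:
  fixes P :: "'s \<times> 'a \<Rightarrow> 's pmf"
  assumes fin: "finite Kset" and k: "k \<in> Kset"
  shows "measure_pmf.expectation (sample_dist P Kset N) (\<lambda>\<omega>. P_K_hat N \<omega> k s')
         = (if N = 0 then 0 else pmf (P k) s')"
proof -
  have comp: "map_pmf (\<lambda>\<omega>. \<omega> k i) (sample_dist P Kset N) = P k" if "i < N" for i
  proof -
    have "map_pmf (\<lambda>\<omega>. \<omega> k i) (sample_dist P Kset N)
        = map_pmf (\<lambda>f. f i) (map_pmf (\<lambda>\<omega>. \<omega> k) (sample_dist P Kset N))"
      by (simp add: pmf.map_comp o_def)
    also have "\<dots> = P k"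
      using fin k that by (simp add: sample_dist_def Pi_pmf_component)
    finally show ?thesis .
  qed
  have ei: "measure_pmf.expectation (sample_dist P Kset N) (\<lambda>\<omega>. indicator {i. \<omega> k i = s'} i) = pmf (P k) s'"
    if "i < N" for i
  proof -
    have "measure_pmf.expectation (sample_dist P Kset N) (\<lambda>\<omega>. indicator {i. \<omega> k i = s'} i)
        = measure_pmf.expectation (sample_dist P Kset N) (\<lambda>\<omega>. indicator {s'} (\<omega> k i) :: real)"
      by (rule arg_cong[where f="measure_pmf.expectation _"]) (auto simp: indicator_def)
    also have "\<dots> = measure_pmf.expectation (map_pmf (\<lambda>\<omega>. \<omega> k i) (sample_dist P Kset N)) (indicator {s'})"
      by (simp only: integral_map_pmf)
    also have "\<dots> = measure_pmf.expectation (P k) (indicator {s'})"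
      by (subst comp[OF that, symmetric]) (simp only: integral_map_pmf)
    also have "\<dots> = pmf (P k) s'"
      by (simp add: measure_pmf_single)
    finally show ?thesis .
  qed
  have "measure_pmf.expectation (sample_dist P Kset N) (\<lambda>\<omega>. P_K_hat N \<omega> k s')
      = measure_pmf.expectation (sample_dist P Kset N) (\<lambda>\<omega>. (\<Sum>i<N. indicator {i. \<omega> k i = s'} i) / real N)"
    unfolding P_K_hat_def card_as_sum ..
  also have "\<dots> = (\<Sum>i<N. measure_pmf.expectation (sample_dist P Kset N) (\<lambda>\<omega>. indicator {i. \<omega> k i = s'} i)) / real N"
    apply (subst integral_divide_zero)
    apply (subst Bochner_Integration.integral_sum[where I="{..<N}" and f="\<lambda>i \<omega>. indicator {i. \<omega> k i = s'} i"])
     apply (rule pmf_int[where B=1])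
     apply (simp add: indicator_def)
    by simp
  also have "\<dots> = (\<Sum>i<N. pmf (P k) s') / real N"
    using ei by simp
  also have "\<dots> = (if N = 0 then 0 else pmf (P k) s')" by simp
  finally show ?thesis .
qed

lemma sum_PK:
  assumes "N > 0"
  shows "(\<Sum>s'\<in>(UNIV::'s::finite set). P_K_hat N \<omega> k s') = 1"
proof -
  have "(\<Sum>s'\<in>(UNIV::'s set). real (card {i \<in> {..<N}. \<omega> k i = s'}))
      = (\<Sum>s'\<in>(UNIV::'s set). \<Sum>i<N. indicator {i. \<omega> k i = s'} i)"
    by (intro sum.cong refl card_as_sum)
  also have "\<dots> = (\<Sum>i<N. \<Sum>s'\<in>(UNIV::'s set). indicator {i. \<omega> k i = s'} i)"
    by (rule sum.swap)
  also have "\<dots> = (\<Sum>i<N. 1)"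
  proof (rule sum.cong[OF refl])
    fix i
    have "(\<Sum>s'\<in>(UNIV::'s set). indicator {i. \<omega> k i = s'} i :: real)
        = (\<Sum>s'\<in>(UNIV::'s set). if s' = \<omega> k i then 1 else 0)"
      by (rule sum.cong) (auto simp: indicator_def)
    also have "\<dots> = 1" by simp
    finally show "(\<Sum>s'\<in>(UNIV::'s set). indicator {i. \<omega> k i = s'} i :: real) = 1" .
  qed
  also have "\<dots> = real N" by simp
  finally show ?thesis using assms
    by (simp add: P_K_hat_def sum_divide_distrib[symmetric])
qed

theorem proposition1:
  fixes P :: "'s::finite \<times> 'a \<Rightarrow> 's pmf"
    and \<phi> :: "'s \<times> 'a \<Rightarrow> real ^ 'k::finite"
    and Kset :: "('s \<times> 'a) set"
    and N :: nat
  assumes "linear_feature_rep P \<phi>"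
    and "row_basis_index_set \<phi> Kset"
    and "N > 0"
  shows "\<exists>lam :: 's \<times> 'a \<Rightarrow> 's \<times> 'a \<Rightarrow> real.
     (\<forall>x. \<phi> x = (\<Sum>k\<in>Kset. lam x k *\<^sub>R \<phi> k))
   \<and> (\<forall>x s'. measure_pmf.expectation (sample_dist P Kset N) (\<lambda>\<omega>. P_hat Kset lam N \<omega> x s')
              = pmf (P x) s')
   \<and> (\<forall>x. (\<Sum>k\<in>Kset. lam x k) = 1)
   \<and> (\<forall>\<omega> x. (\<Sum>s'\<in>UNIV. P_hat Kset lam N \<omega> x s') = 1)
   \<and> ((\<forall>x. \<forall>k\<in>Kset. lam x k \<ge> 0) \<longrightarrow> (\<forall>\<omega> x s'. P_hat Kset lam N \<omega> x s' \<ge> 0))"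
proof -
  from assms(2) have inj: "inj_on \<phi> Kset" and ind: "independent (\<phi> ` Kset)"
    and sp: "span (\<phi> ` Kset) = span (range \<phi>)"
    unfolding row_basis_index_set_def by auto
  have finI: "finite (\<phi> ` Kset)" using ind by (rule independent_imp_finite)
  have fin: "finite Kset" using finite_image_iff[OF inj] finI by simp
  have "\<forall>x. \<exists>u. \<phi> x = (\<Sum>v\<in>\<phi> ` Kset. u v *\<^sub>R v)"
  proof
    fix x
    have "\<phi> x \<in> span (\<phi> ` Kset)" using sp by (simp add: span_base)
    then show "\<exists>u. \<phi> x = (\<Sum>v\<in>\<phi> ` Kset. u v *\<^sub>R v)"
      using span_finite[OF finI] by auto
  qed
  then obtain u where u: "\<And>x. \<phi> x = (\<Sum>v\<in>\<phi> ` Kset. u x v *\<^sub>R v)"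
    by metis
  define lam where "lam x k = u x (\<phi> k)" for x k
  have rep: "\<phi> x = (\<Sum>k\<in>Kset. lam x k *\<^sub>R \<phi> k)" for x
    using u[of x] by (simp add: sum.reindex[OF inj] lam_def)
  from assms(1) obtain \<psi> where psi: "\<And>x s'. pmf (P x) s' = (\<Sum>j\<in>UNIV. \<phi> x $ j * \<psi> j s')"
    unfolding linear_feature_rep_def by blast
  have pmfrep: "pmf (P x) s' = (\<Sum>k\<in>Kset. lam x k * pmf (P k) s')" for x s'
  proof -
    have "pmf (P x) s' = (\<Sum>j\<in>UNIV. (\<Sum>k\<in>Kset. lam x k * \<phi> k $ j) * \<psi> j s')"
      unfolding psi by (subst rep) (simp add: sum_component)
    also have "\<dots> = (\<Sum>k\<in>Kset. lam x k * (\<Sum>j\<in>UNIV. \<phi> k $ j * \<psi> j s'))"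
      apply (simp add: sum_distrib_left sum_distrib_right mult.assoc)
      apply (subst sum.swap[of _ Kset]) by (simp add: mult.left_commute)
    also have "\<dots> = (\<Sum>k\<in>Kset. lam x k * pmf (P k) s')" by (simp add: psi)
    finally show ?thesis .
  qed
  have sum1: "(\<Sum>k\<in>Kset. lam x k) = 1" for x
  proof -
    have "1 = (\<Sum>s'\<in>UNIV. pmf (P x) s')" by (rule sum_pmf_eq_1[symmetric]) auto
    also have "\<dots> = (\<Sum>k\<in>Kset. lam x k * (\<Sum>s'\<in>UNIV. pmf (P k) s'))"
      apply (simp only: pmfrep[of x] sum_distrib_left)
      by (rule sum.swap)
    also have "\<dots> = (\<Sum>k\<in>Kset. lam x k)"
      using sum_pmf_eq_1[of "UNIV::'s set"] by simp
    finally show ?thesis by simp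
  qed
  have exp: "measure_pmf.expectation (sample_dist P Kset N) (\<lambda>\<omega>. P_hat Kset lam N \<omega> x s')
              = pmf (P x) s'" for x s'
  proof -
    have "measure_pmf.expectation (sample_dist P Kset N) (\<lambda>\<omega>. P_hat Kset lam N \<omega> x s')
      = (\<Sum>k\<in>Kset. lam x k * measure_pmf.expectation (sample_dist P Kset N) (\<lambda>\<omega>. P_K_hat N \<omega> k s'))"
      unfolding P_hat_def
      apply (subst Bochner_Integration.integral_sum[where I=Kset and f="\<lambda>k \<omega>. lam x k * P_K_hat N \<omega> k s'"])
       apply (rule_tac B="\<bar>lam x i\<bar> * 1" in pmf_int)
       apply (simp only: norm_mult real_norm_def abs_mult)
       apply (rule mult_left_mono[OF PK_bound[simplified real_norm_def]])
       apply simp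
      by simp
    also have "\<dots> = (\<Sum>k\<in>Kset. lam x k * pmf (P k) s')"
      using assms(3) by (intro sum.cong refl) (simp add: expect_PK[OF fin])
    finally show ?thesis by (simp only: pmfrep[of x s'])
  qed
  have sumhat: "(\<Sum>s'\<in>UNIV. P_hat Kset lam N \<omega> x s') = 1" for \<omega> x
    unfolding P_hat_def
    apply (subst sum.swap)
    by (simp add: sum_distrib_left[symmetric] sum_PK[OF assms(3)] sum1)
  have nonneg: "P_hat Kset lam N \<omega> x s' \<ge> 0" if "\<forall>x. \<forall>k\<in>Kset. lam x k \<ge> 0" for \<omega> x s'
    unfolding P_hat_def P_K_hat_def
  proof (rule sum_nonneg)
    fix k assume "k \<in> Kset"
    then have "lam x k \<ge> 0" using that by blast
    then show "0 \<le> lam x k * (real (card {i \<in> {..<N}. \<omega> k i = s'}) / real N)"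
      by simp
  qed
  show ?thesis
    by (rule exI[of _ lam]) (use rep exp sum1 sumhat nonneg in blast)
qed

end
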